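(* Let $X,Y$ be complex Banach spaces, let $\emptyset\ne I\subseteq\mathbb R^n$ be closed with $I+I\subseteq I$, let $\mathcal B$ be any family of compact subsets of $X$ such that every $x\in X$ belongs to some $B\in\mathcal B$, and let $F:I\times X\to Y$ be uniformly continuous and $I$-asymptotically Bohr $\mathcal B$-almost periodic of type $1$. Suppose that: (a) for every $l>0$ and $M>0$ there exist $\mathbf t_0\in I$ and $k>0$ such that for every $\mathbf t\in I_{M+l}$ there exists $\mathbf t_0'\in I$ such that for every $\mathbf t_0''\in B(\mathbf t_0',l)\cap I$ we have $\mathbf t-\mathbf t_0''\in B(\mathbf t_0,kl)\cap I_M$; (b) there exists $L>0$ such that $I_{kL}\setminus I_{(k+1)L}\ne\emptyset$ for all $k\in\mathbb N$; (c) $I_M+I\subseteq I_M$ for all $M>0$. Then $F$ is $(\mathrm R,\mathcal B)$-multi-almost periodic, where $\mathrm R$ is the collection of all sequences in $I$. Furthermore, if $X=\{0\}$ and $\mathcal B=\{X\}$, then $F$ (viewed as a function $I\to Y$) is $I$-asymptotically Bohr almost periodic.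
   Context: $B(\mathbf t_0,l)$ is the closed Euclidean ball; $I_M:=\{\lambda\in I:|\lambda|\ge M\}$. $F$ is $I$-asymptotically Bohr $\mathcal B$-almost periodic of type 1 if for every $B\in\mathcal B$ and $\epsilon>0$ there exist $l>0$ and $M>0$ such that for each $\mathbf t_0\in I$ there exists $\tau\in B(\mathbf t_0,l)\cap I$ with $\|F(\mathbf t+\tau;x)-F(\mathbf t;x)\|_Y\le\epsilon$ whenever $\mathbf t,\mathbf t+\tau\in I_M$ and $x\in B$. $F$ is $(\mathrm R,\mathcal B)$-multi-almost periodic if for every $B\in\mathcal B$ and every sequence $(\mathbf b_k)\in\mathrm R$ there exist a subsequence $(\mathbf b_{k_l})$ and $F^\ast:I\times X\to Y$ with $F(\mathbf t+\mathbf b_{k_l};x)\to F^\ast(\mathbf t;x)$ uniformly for $x\in B$, $\mathbf t\in I$. A function $F:I\to Y$ is $I$-asymptotically Bohr almost periodic if $F=G+Q$ where $G:I\to Y$ is Bohr almost periodic (continuous, and for every $\epsilon>0$ there is $l>0$ such that for each $\mathbf t_0\in I$ there is $\tau\in B(\mathbf t_0,l)\cap I$ with $\|G(\mathbf t+\tau)-G(\mathbf t)\|_Y\le\epsilon$ for all $\mathbf t\in I$) and $Q:I\to Y$ is continuous with $\lim_{\mathbf t\in I,|\mathbf t|\to\infty}Q(\mathbf t)=0$. *)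

theory Defs
  imports "HOL-Analysis.Analysis"
begin

definition I_ge :: "(real ^ 'n) set \<Rightarrow> real \<Rightarrow> (real ^ 'n) set" where
  "I_ge I M = {lam \<in> I. norm lam \<ge> M}"

definition asymp_bohr_B_ap_type1 ::
  "(real ^ 'n) set \<Rightarrow> 'x set set \<Rightarrow> (real ^ 'n \<Rightarrow> 'x \<Rightarrow> 'y::real_normed_vector) \<Rightarrow> bool" where
  "asymp_bohr_B_ap_type1 I BB F \<longleftrightarrow>
     (\<forall>B\<in>BB. \<forall>\<epsilon>>0. \<exists>l>0. \<exists>M>0. \<forall>t0\<in>I. \<exists>\<tau>\<in>cball t0 l \<inter> I.
        \<forall>t x. t \<in> I_ge I M \<and> t + \<tau> \<in> I_ge I M \<and> x \<in> B \<longrightarrow>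
              norm (F (t + \<tau>) x - F t x) \<le> \<epsilon>)"

definition R_B_multi_ap ::
  "(real ^ 'n) set \<Rightarrow> (nat \<Rightarrow> real ^ 'n) set \<Rightarrow> 'x set set \<Rightarrow> (real ^ 'n \<Rightarrow> 'x \<Rightarrow> 'y::real_normed_vector) \<Rightarrow> bool" where
  "R_B_multi_ap I R BB F \<longleftrightarrow>
     (\<forall>B\<in>BB. \<forall>b\<in>R. \<exists>r::nat\<Rightarrow>nat. \<exists>Fs::real ^ 'n \<Rightarrow> 'x \<Rightarrow> 'y. strict_mono r \<and>
        uniform_limit (I \<times> B) (\<lambda>k (t, x). F (t + b (r k)) x) (\<lambda>(t, x). Fs t x) sequentially)"

definition bohr_ap :: "(real ^ 'n) set \<Rightarrow> (real ^ 'n \<Rightarrow> 'y::real_normed_vector) \<Rightarrow> bool" where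
  "bohr_ap I G \<longleftrightarrow> continuous_on I G \<and>
     (\<forall>\<epsilon>>0. \<exists>l>0. \<forall>t0\<in>I. \<exists>\<tau>\<in>cball t0 l \<inter> I. \<forall>t\<in>I. norm (G (t + \<tau>) - G t) \<le> \<epsilon>)"

definition asymp_bohr_ap :: "(real ^ 'n) set \<Rightarrow> (real ^ 'n \<Rightarrow> 'y::real_normed_vector) \<Rightarrow> bool" where
  "asymp_bohr_ap I F \<longleftrightarrow> (\<exists>G Q. bohr_ap I G \<and> continuous_on I Q \<and>
     (\<forall>\<epsilon>>0. \<exists>M. \<forall>t\<in>I. norm t \<ge> M \<longrightarrow> norm (Q t) \<le> \<epsilon>) \<and>
     (\<forall>t\<in>I. F t = G t + Q t))"

end

theory Submission
  imports Defs "HOL-Library.Diagonal_Subsequence"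
begin

lemma approx_lemma:
  fixes I :: "(real ^ 'n) set" and F :: "real ^ 'n \<Rightarrow> 'x \<Rightarrow> 'y::real_normed_vector"
  assumes I_closed: "closed I"
    and F_ap: "asymp_bohr_B_ap_type1 I BB F"
    and cond_a: "\<forall>l>0. \<forall>M>0. \<exists>t0\<in>I. \<exists>k>0. \<forall>t\<in>I_ge I (M + l). \<exists>t0'\<in>I.
                   \<forall>t0''\<in>cball t0' l \<inter> I. t - t0'' \<in> cball t0 (k * l) \<inter> I_ge I M"
    and cond_c: "\<forall>M>0. \<forall>a\<in>I_ge I M. \<forall>b\<in>I. a + b \<in> I_ge I M"
    and B: "B \<in> BB" and e: "e > 0"
  shows "\<exists>C h. compact C \<and> C \<subseteq> I \<and> (\<forall>b\<in>I. h b \<in> C \<and>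
            (\<forall>t\<in>I. \<forall>x\<in>B. norm (F (t + b) x - F (t + h b) x) \<le> e))"
proof -
  obtain l M where l: "l > 0" and M: "M > 0" and
    ap: "\<And>t0. t0 \<in> I \<Longrightarrow> \<exists>\<tau>\<in>cball t0 l \<inter> I. \<forall>t x. t \<in> I_ge I M \<and> t + \<tau> \<in> I_ge I M \<and> x \<in> B \<longrightarrow>
              norm (F (t + \<tau>) x - F t x) \<le> e"
  proof -
    have "\<exists>l>0. \<exists>M>0. \<forall>t0\<in>I. \<exists>\<tau>\<in>cball t0 l \<inter> I. \<forall>t x. t \<in> I_ge I M \<and> t + \<tau> \<in> I_ge I M \<and> x \<in> B \<longrightarrow>
              norm (F (t + \<tau>) x - F t x) \<le> e"
      using F_ap[unfolded asymp_bohr_B_ap_type1_def, rule_format, OF B e] .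
    then show ?thesis using that by blast
  qed
  obtain t0 k where t0: "t0 \<in> I" and k: "k > 0" and
    ca: "\<And>t. t \<in> I_ge I (M + l) \<Longrightarrow> \<exists>t0'\<in>I. \<forall>t0''\<in>cball t0' l \<inter> I. t - t0'' \<in> cball t0 (k * l) \<inter> I_ge I M"
  proof -
    have "\<exists>t0\<in>I. \<exists>k>0. \<forall>t\<in>I_ge I (M + l). \<exists>t0'\<in>I. \<forall>t0''\<in>cball t0' l \<inter> I. t - t0'' \<in> cball t0 (k * l) \<inter> I_ge I M"
      using cond_a[rule_format, OF l M] .
    then show ?thesis using that by blast
  qed
  define C where "C = (cball 0 (M + l) \<union> cball t0 (k * l)) \<inter> I"
  have cC: "compact C" unfolding C_def
    by (intro compact_Int_closed compact_Un I_closed compact_cball)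
  have CI: "C \<subseteq> I" unfolding C_def by auto
  have "\<forall>b\<in>I. \<exists>c. c \<in> C \<and> (\<forall>t\<in>I. \<forall>x\<in>B. norm (F (t + b) x - F (t + c) x) \<le> e)"
  proof
    fix b assume bI: "b \<in> I"
    show "\<exists>c. c \<in> C \<and> (\<forall>t\<in>I. \<forall>x\<in>B. norm (F (t + b) x - F (t + c) x) \<le> e)"
    proof (cases "norm b < M + l")
      case True
      then have "b \<in> C" using bI unfolding C_def by (auto simp: dist_norm)
      then show ?thesis using e by (intro exI[of _ b]) simp
    next
      case False
      then have "b \<in> I_ge I (M + l)" using bI unfolding I_ge_def by auto
      then obtain t0' where t0': "t0' \<in> I" and
        h: "\<And>t0''. t0'' \<in> cball t0' l \<inter> I \<Longrightarrow> b - t0'' \<in> cball t0 (k * l) \<inter> I_ge I M"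
        using ca by blast
      obtain \<tau> where \<tau>: "\<tau> \<in> cball t0' l \<inter> I" and
        ap\<tau>: "\<And>t x. t \<in> I_ge I M \<Longrightarrow> t + \<tau> \<in> I_ge I M \<Longrightarrow> x \<in> B \<Longrightarrow> norm (F (t + \<tau>) x - F t x) \<le> e"
        using ap[OF t0'] by blast
      have c1: "b - \<tau> \<in> cball t0 (k * l) \<inter> I_ge I M" using h[OF \<tau>] .
      then have cC: "b - \<tau> \<in> C" unfolding C_def I_ge_def by auto
      have "\<forall>t\<in>I. \<forall>x\<in>B. norm (F (t + b) x - F (t + (b - \<tau>)) x) \<le> e"
      proof (intro ballI)
        fix t x assume tI: "t \<in> I" and xB: "x \<in> B"
        have A1: "t + (b - \<tau>) \<in> I_ge I M" using cond_c M c1 tI by (metis IntD2 add.commute)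
        have bM: "b \<in> I_ge I M" using \<open>b \<in> I_ge I (M + l)\<close> l unfolding I_ge_def by auto
        have "b + t \<in> I_ge I M" using cond_c M bM tI by blast
        then have A2: "t + (b - \<tau>) + \<tau> \<in> I_ge I M" by (simp add: algebra_simps)
        show "norm (F (t + b) x - F (t + (b - \<tau>)) x) \<le> e"
          using ap\<tau>[OF A1 A2 xB] by (simp add: algebra_simps)
      qed
      then show ?thesis using cC by blast
    qed
  qed
  then have "\<exists>h. \<forall>b\<in>I. h b \<in> C \<and> (\<forall>t\<in>I. \<forall>x\<in>B. norm (F (t + b) x - F (t + h b) x) \<le> e)"
    by (rule bchoice)
  then show ?thesis using cC CI by (intro exI[of _ C]) auto
qed

lemma uc_shift:
  fixes I :: "(real ^ 'n) set" and F :: "real ^ 'n \<Rightarrow> 'x::real_normed_vector \<Rightarrow> 'y::real_normed_vector"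
  assumes F_uc: "uniformly_continuous_on (I \<times> UNIV) (\<lambda>(t, x). F t x)" and e: "e > 0"
  shows "\<exists>d>0. \<forall>t c c' x. t + c \<in> I \<longrightarrow> t + c' \<in> I \<longrightarrow> dist c c' < d \<longrightarrow>
            dist (F (t + c) x) (F (t + c') x) < e"
proof -
  have "\<exists>d>0. \<forall>p\<in>I \<times> UNIV. \<forall>p'\<in>I \<times> UNIV. dist p' p < d \<longrightarrow>
          dist ((\<lambda>(t, x). F t x) p') ((\<lambda>(t, x). F t x) p) < e"
    using F_uc[unfolded uniformly_continuous_on_def, rule_format, OF e] .
  then obtain d where d: "d > 0" and
    H: "\<And>p p'. p \<in> I \<times> UNIV \<Longrightarrow> p' \<in> I \<times> UNIV \<Longrightarrow> dist p' p < d \<Longrightarrow>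
          dist ((\<lambda>(t, x). F t x) p') ((\<lambda>(t, x). F t x) p) < e"
    by blast
  show ?thesis
  proof (intro exI[of _ d] conjI allI impI d)
    fix t c c' and x :: 'x assume A: "t + c \<in> I" "t + c' \<in> I" "dist c c' < d"
    have "dist (t + c, x) (t + c', x) < d" using A(3) by (simp add: dist_Pair_Pair)
    from H[of "(t + c', x)" "(t + c, x)", OF _ _ this] A(1,2)
    show "dist (F (t + c) x) (F (t + c') x) < e" by simp
  qed
qed

lemma tri4: "(a::real) \<le> p + c \<Longrightarrow> c \<le> r + s \<Longrightarrow> p \<le> q \<Longrightarrow> s \<le> q \<Longrightarrow> r < e / 4 \<Longrightarrow> q < e / 4 \<Longrightarrow> 0 < e \<Longrightarrow> a < e"
  by linarith

lemma part1:
  fixes I :: "(real ^ 'n) set" and F :: "real ^ 'n \<Rightarrow> 'x::real_normed_vector \<Rightarrow> 'y::banach"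
  assumes I_closed: "closed I"
    and I_add: "\<And>a b. a \<in> I \<Longrightarrow> b \<in> I \<Longrightarrow> a + b \<in> I"
    and F_uc: "uniformly_continuous_on (I \<times> UNIV) (\<lambda>(t, x). F t x)"
    and F_ap: "asymp_bohr_B_ap_type1 I BB F"
    and cond_a: "\<forall>l>0. \<forall>M>0. \<exists>t0\<in>I. \<exists>k>0. \<forall>t\<in>I_ge I (M + l). \<exists>t0'\<in>I.
                   \<forall>t0''\<in>cball t0' l \<inter> I. t - t0'' \<in> cball t0 (k * l) \<inter> I_ge I M"
    and cond_c: "\<forall>M>0. \<forall>a\<in>I_ge I M. \<forall>b\<in>I. a + b \<in> I_ge I M"
  shows "R_B_multi_ap I {b. \<forall>k. b k \<in> I} BB F"
  unfolding R_B_multi_ap_def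
proof (intro ballI)
  fix B and b :: "nat \<Rightarrow> real ^ 'n" assume B: "B \<in> BB" and b: "b \<in> {b. \<forall>k. b k \<in> I}"
  then have bI: "\<And>k. b k \<in> I" by auto
  have "\<forall>j::nat. \<exists>C h. compact C \<and> C \<subseteq> I \<and> (\<forall>b\<in>I. h b \<in> C \<and>
            (\<forall>t\<in>I. \<forall>x\<in>B. norm (F (t + b) x - F (t + h b) x) \<le> 1 / real (Suc j)))"
    using approx_lemma[OF I_closed F_ap cond_a cond_c B] by simp
  from choice[OF this] obtain C where C: "\<forall>j. \<exists>h. compact (C j) \<and> C j \<subseteq> I \<and> (\<forall>b\<in>I. h b \<in> C j \<and>
            (\<forall>t\<in>I. \<forall>x\<in>B. norm (F (t + b) x - F (t + h b) x) \<le> 1 / real (Suc j)))"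
    by blast
  from choice[OF C] obtain h :: "nat \<Rightarrow> real ^ 'n \<Rightarrow> real ^ 'n" where Ch: "\<And>j. compact (C j) \<and> C j \<subseteq> I \<and> (\<forall>b\<in>I. h j b \<in> C j \<and>
            (\<forall>t\<in>I. \<forall>x\<in>B. norm (F (t + b) x - F (t + h j b) x) \<le> 1 / real (Suc j)))"
    by blast
  have hC: "\<And>j b. b \<in> I \<Longrightarrow> h j b \<in> C j" using Ch by blast
  have hI: "\<And>j b. b \<in> I \<Longrightarrow> h j b \<in> I" using Ch by blast
  have happ: "\<And>j b t x. b \<in> I \<Longrightarrow> t \<in> I \<Longrightarrow> x \<in> B \<Longrightarrow>
       norm (F (t + b) x - F (t + h j b) x) \<le> 1 / real (Suc j)" using Ch by blast
  define P where "P = (\<lambda>j (s::nat\<Rightarrow>nat). convergent (\<lambda>k. h j (b (s k))))"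
  interpret S: subseqs P
  proof
    fix j and s :: "nat\<Rightarrow>nat" assume "strict_mono s"
    have "\<forall>k. h j (b (s k)) \<in> C j" using hC bI by blast
    from seq_compactE[OF compact_imp_seq_compact[OF conjunct1[OF Ch]] this]
    obtain L r where "strict_mono r" "((\<lambda>k. h j (b (s k))) \<circ> r) \<longlonglongrightarrow> L" by blast
    then show "\<exists>r'. strict_mono r' \<and> P j (s \<circ> r')"
      unfolding P_def convergent_def by (intro exI[of _ r]) (auto simp: o_def)
  qed
  have stable: "\<And>r s n. strict_mono r \<Longrightarrow> P n s \<Longrightarrow> P n (s \<circ> r)"
  proof -
    fix r s n assume r: "strict_mono (r::nat\<Rightarrow>nat)" and "P n s"
    then obtain L where "(\<lambda>k. h n (b (s k))) \<longlonglongrightarrow> L" unfolding P_def convergent_def by blast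
    from LIMSEQ_subseq_LIMSEQ[OF this r] show "P n (s \<circ> r)"
      unfolding P_def convergent_def by (auto simp: o_def)
  qed
  have cauchy: "\<And>j. Cauchy (\<lambda>k. h j (b (S.diagseq k)))"
  proof -
    fix j
    have "P j (S.diagseq \<circ> (+) (Suc j))" by (rule S.diagseq_holds[OF stable])
    then obtain L where "(\<lambda>k. h j (b (S.diagseq (k + Suc j)))) \<longlonglongrightarrow> L"
      unfolding P_def convergent_def by (auto simp: o_def add.commute)
    then have "(\<lambda>k. h j (b (S.diagseq k))) \<longlonglongrightarrow> L" by (rule LIMSEQ_offset)
    then show "Cauchy (\<lambda>k. h j (b (S.diagseq k)))" using LIMSEQ_imp_Cauchy by blast
  qed
  have UC: "uniformly_Cauchy_on (I \<times> B) (\<lambda>k (t, x). F (t + b (S.diagseq k)) x)"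
  proof (rule uniformly_Cauchy_onI)
    fix e :: real assume e: "e > 0"
    then have "e / 4 > 0" by simp
    from reals_Archimedean[OF this] obtain j where j: "inverse (real (Suc j)) < e / 4" by blast
    from uc_shift[OF F_uc \<open>e / 4 > 0\<close>] obtain d where d: "d > 0" and
      dH: "\<And>t c c' x. t + c \<in> I \<Longrightarrow> t + c' \<in> I \<Longrightarrow> dist c c' < d \<Longrightarrow>
            dist (F (t + c) x) (F (t + c') x) < e / 4" by blast
    from cauchy[of j, unfolded Cauchy_def, rule_format, OF d] obtain N where
      N: "\<And>m n. m \<ge> N \<Longrightarrow> n \<ge> N \<Longrightarrow> dist (h j (b (S.diagseq m))) (h j (b (S.diagseq n))) < d"
      by blast
    show "\<exists>M. \<forall>p\<in>I \<times> B. \<forall>m\<ge>M. \<forall>n\<ge>M.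
            dist ((\<lambda>k (t, x). F (t + b (S.diagseq k)) x) m p) ((\<lambda>k (t, x). F (t + b (S.diagseq k)) x) n p) < e"
    proof (intro exI[of _ N] ballI allI impI)
      fix p m n assume p: "p \<in> I \<times> B" and m: "m \<ge> N" and n: "n \<ge> N"
      obtain t x where tx: "p = (t, x)" "t \<in> I" "x \<in> B" using p by blast
      let ?bm = "b (S.diagseq m)" and ?bn = "b (S.diagseq n)"
      have 1: "dist (F (t + ?bm) x) (F (t + h j ?bm) x) \<le> 1 / real (Suc j)"
        using happ[OF bI tx(2,3)] by (simp add: dist_norm)
      have 2: "dist (F (t + ?bn) x) (F (t + h j ?bn) x) \<le> 1 / real (Suc j)"
        using happ[OF bI tx(2,3)] by (simp add: dist_norm)
      have 3: "dist (F (t + h j ?bm) x) (F (t + h j ?bn) x) < e / 4"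
        using dH[OF I_add[OF tx(2) hI[OF bI]] I_add[OF tx(2) hI[OF bI]] N[OF m n]] .
      have j': "1 / real (Suc j) < e / 4" using j by (simp add: inverse_eq_divide)
      have T1: "dist (F (t + ?bm) x) (F (t + ?bn) x) \<le> dist (F (t + ?bm) x) (F (t + h j ?bm) x) + dist (F (t + h j ?bm) x) (F (t + ?bn) x)"
        by (rule dist_triangle)
      have T2: "dist (F (t + h j ?bm) x) (F (t + ?bn) x) \<le> dist (F (t + h j ?bm) x) (F (t + h j ?bn) x) + dist (F (t + h j ?bn) x) (F (t + ?bn) x)"
        by (rule dist_triangle)
      have T3: "dist (F (t + h j ?bn) x) (F (t + ?bn) x) = dist (F (t + ?bn) x) (F (t + h j ?bn) x)"
        by (rule dist_commute)
      have "dist (F (t + ?bm) x) (F (t + ?bn) x) < e"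
        using tri4[OF T1 T2[unfolded T3] 1 2 3 j' e] .
      then show "dist ((\<lambda>k (t, x). F (t + b (S.diagseq k)) x) m p) ((\<lambda>k (t, x). F (t + b (S.diagseq k)) x) n p) < e"
        using tx(1) by simp
    qed
  qed
  from Cauchy_uniformly_convergent[OF UC] obtain l where
    l: "uniform_limit (I \<times> B) (\<lambda>k (t, x). F (t + b (S.diagseq k)) x) l sequentially"
    unfolding uniformly_convergent_on_def by blast
  show "\<exists>r Fs. strict_mono r \<and>
        uniform_limit (I \<times> B) (\<lambda>k (t, x). F (t + b (r k)) x) (\<lambda>(t, x). Fs t x) sequentially"
    by (intro exI[of _ S.diagseq] exI[of _ "\<lambda>t x. l (t, x)"] conjI S.subseq_diagseq)
       (simp add: case_prod_eta l)
qed


lemma lim_dist_le: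
  fixes f g :: "nat \<Rightarrow> 'a::metric_space"
  assumes "f \<longlonglongrightarrow> a" "g \<longlonglongrightarrow> b" "eventually (\<lambda>n. dist (f n) (g n) \<le> e) sequentially"
  shows "dist a b \<le> e"
  by (rule tendsto_upperbound[OF tendsto_dist[OF assms(1,2)] assms(3)]) simp

theorem theorem2p33:
  fixes I :: "(real ^ 'n) set"
    and BB :: "('x::banach) set set"
    and F :: "real ^ 'n \<Rightarrow> 'x \<Rightarrow> 'y::banach"
  assumes I_ne: "I \<noteq> {}" and I_closed: "closed I"
    and I_add: "\<And>a b. a \<in> I \<Longrightarrow> b \<in> I \<Longrightarrow> a + b \<in> I"
    and BB_compact: "\<And>B. B \<in> BB \<Longrightarrow> compact B"
    and BB_cover: "\<And>x. \<exists>B\<in>BB. x \<in> B"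
    and F_uc: "uniformly_continuous_on (I \<times> UNIV) (\<lambda>(t, x). F t x)"
    and F_ap: "asymp_bohr_B_ap_type1 I BB F"
    and cond_a: "\<forall>l>0. \<forall>M>0. \<exists>t0\<in>I. \<exists>k>0. \<forall>t\<in>I_ge I (M + l). \<exists>t0'\<in>I.
                   \<forall>t0''\<in>cball t0' l \<inter> I. t - t0'' \<in> cball t0 (k * l) \<inter> I_ge I M"
    and cond_b: "\<exists>L>0. \<forall>k::nat. k \<ge> 1 \<longrightarrow> I_ge I (real k * L) - I_ge I (real (k + 1) * L) \<noteq> {}"
    and cond_c: "\<forall>M>0. \<forall>a\<in>I_ge I M. \<forall>b\<in>I. a + b \<in> I_ge I M"
  shows "R_B_multi_ap I {b. \<forall>k. b k \<in> I} BB F \<and>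
         (((UNIV :: 'x set) = {0} \<and> BB = {UNIV}) \<longrightarrow> asymp_bohr_ap I (\<lambda>t. F t 0))"
proof (intro conjI impI)
  note P1 = part1[OF I_closed I_add F_uc F_ap cond_a cond_c]
  show "R_B_multi_ap I {b. \<forall>k. b k \<in> I} BB F" by (rule P1)
  assume X: "(UNIV :: 'x set) = {0} \<and> BB = {UNIV}"
  then have BU: "UNIV \<in> BB" by simp
  have apU: "\<exists>l>0. \<exists>M>0. \<forall>t0\<in>I. \<exists>\<tau>\<in>cball t0 l \<inter> I.
        \<forall>t x. t \<in> I_ge I M \<and> t + \<tau> \<in> I_ge I M \<and> x \<in> UNIV \<longrightarrow> norm (F (t + \<tau>) x - F t x) \<le> e" if "e > 0" for e
    using F_ap[unfolded asymp_bohr_B_ap_type1_def, rule_format, OF BU that] .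
  obtain L where L: "L > 0" and LH: "\<And>k::nat. k \<ge> 1 \<Longrightarrow> I_ge I (real k * L) - I_ge I (real (k + 1) * L) \<noteq> {}"
    using cond_b by blast
  have unb: "\<exists>t\<in>I. norm t \<ge> R" for R :: real
  proof -
    define k where "k = nat \<lceil>R / L\<rceil> + 1"
    have k1: "k \<ge> 1" unfolding k_def by simp
    have "real k \<ge> R / L" unfolding k_def by linarith
    then have kR: "real k * L \<ge> R" using L by (simp add: field_simps)
    from LH[OF k1] obtain t where "t \<in> I_ge I (real k * L)" by blast
    then have "t \<in> I" "norm t \<ge> real k * L" unfolding I_ge_def by auto
    moreover have "norm t \<ge> R" using \<open>norm t \<ge> real k * L\<close> kR by linarith
    ultimately show ?thesis by blast
  qed
  have "\<forall>j::nat. \<exists>\<tau> M. \<tau> \<in> I \<and> norm \<tau> \<ge> real j \<and>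
          (\<forall>t\<in>I_ge I M. norm (F (t + \<tau>) 0 - F t 0) \<le> 1 / real (Suc j))"
  proof
    fix j :: nat
    have "1 / real (Suc j) > 0" by simp
    from apU[OF this] obtain l M where l: "l > 0" and M: "M > 0" and
      ap: "\<forall>t0\<in>I. \<exists>\<tau>\<in>cball t0 l \<inter> I.
        \<forall>t x. t \<in> I_ge I M \<and> t + \<tau> \<in> I_ge I M \<and> x \<in> UNIV \<longrightarrow> norm (F (t + \<tau>) x - F t x) \<le> 1 / real (Suc j)"
      by blast
    obtain t0 where t0: "t0 \<in> I" "norm t0 \<ge> real j + l" using unb by blast
    from ap t0(1) obtain \<tau> where \<tau>: "\<tau> \<in> cball t0 l" "\<tau> \<in> I" and
      apt: "\<forall>t x. t \<in> I_ge I M \<and> t + \<tau> \<in> I_ge I M \<and> x \<in> UNIV \<longrightarrow> norm (F (t + \<tau>) x - F t x) \<le> 1 / real (Suc j)"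
      by blast
    have "norm t0 \<le> norm \<tau> + norm (t0 - \<tau>)" by (rule norm_triangle_sub)
    moreover have "norm (t0 - \<tau>) \<le> l" using \<tau>(1) by (simp add: dist_norm)
    ultimately have n\<tau>: "norm \<tau> \<ge> real j" using t0(2) by linarith
    have "\<forall>t\<in>I_ge I M. norm (F (t + \<tau>) 0 - F t 0) \<le> 1 / real (Suc j)"
    proof
      fix t assume t: "t \<in> I_ge I M"
      have "t + \<tau> \<in> I_ge I M" using cond_c M t \<tau>(2) by blast
      then show "norm (F (t + \<tau>) 0 - F t 0) \<le> 1 / real (Suc j)" using apt[rule_format, OF conjI[OF t conjI[OF _ UNIV_I]]] by blast
    qed
    then show "\<exists>\<tau> M. \<tau> \<in> I \<and> norm \<tau> \<ge> real j \<and>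
          (\<forall>t\<in>I_ge I M. norm (F (t + \<tau>) 0 - F t 0) \<le> 1 / real (Suc j))"
      using \<tau>(2) n\<tau> by blast
  qed
  from choice[OF this] obtain \<tau> :: "nat \<Rightarrow> real ^ 'n" where
    T1: "\<forall>j. \<exists>M. \<tau> j \<in> I \<and> norm (\<tau> j) \<ge> real j \<and>
          (\<forall>t\<in>I_ge I M. norm (F (t + \<tau> j) 0 - F t 0) \<le> 1 / real (Suc j))" by blast
  from choice[OF T1] obtain Mj :: "nat \<Rightarrow> real" where
    T2: "\<And>j. \<tau> j \<in> I \<and> norm (\<tau> j) \<ge> real j \<and>
          (\<forall>t\<in>I_ge I (Mj j). norm (F (t + \<tau> j) 0 - F t 0) \<le> 1 / real (Suc j))" by blast
  have \<tau>I: "\<And>j. \<tau> j \<in> I" using T2 by blast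
  have \<tau>n: "\<And>j. norm (\<tau> j) \<ge> real j" using T2 by blast
  have \<tau>ap: "\<And>j t. t \<in> I_ge I (Mj j) \<Longrightarrow> norm (F (t + \<tau> j) 0 - F t 0) \<le> 1 / real (Suc j)"
    using T2 by blast
  have "\<tau> \<in> {b. \<forall>k. b k \<in> I}" using \<tau>I by blast
  with P1 BU obtain r :: "nat \<Rightarrow> nat" and Fs :: "real ^ 'n \<Rightarrow> 'x \<Rightarrow> 'y" where
    r: "strict_mono r" and
    ul: "uniform_limit (I \<times> UNIV) (\<lambda>k (t, x). F (t + \<tau> (r k)) x) (\<lambda>(t, x). Fs t x) sequentially"
    unfolding R_B_multi_ap_def by blast
  define G where "G = (\<lambda>t. Fs t 0)"
  have conv: "(\<lambda>k. F (t + \<tau> (r k)) 0) \<longlonglongrightarrow> G t" if "t \<in> I" for t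
    using tendsto_uniform_limitI[OF ul, of "(t, 0)"] that unfolding G_def by simp
  have unif: "\<exists>N. \<forall>n\<ge>N. \<forall>t\<in>I. dist (F (t + \<tau> (r n)) 0) (G t) < e" if "e > 0" for e
  proof -
    from ul[unfolded uniform_limit_sequentially_iff, rule_format, OF that] obtain N where
      N: "\<forall>n\<ge>N. \<forall>p\<in>I \<times> UNIV. dist ((\<lambda>(t, x). F (t + \<tau> (r n)) x) p) ((\<lambda>(t, x). Fs t x) p) < e"
      by blast
    show ?thesis
    proof (intro exI[of _ N] allI impI ballI)
      fix n t assume "n \<ge> N" "t \<in> I"
      with N have "dist ((\<lambda>(t, x). F (t + \<tau> (r n)) x) (t, 0)) ((\<lambda>(t, x). Fs t x) (t, 0)) < e" by blast
      then show "dist (F (t + \<tau> (r n)) 0) (G t) < e" unfolding G_def by simp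
    qed
  qed
  have rn: "\<And>n. norm (\<tau> (r n)) \<ge> real n"
  proof -
    fix n
    have "real n \<le> real (r n)" using seq_suble[OF r, of n] by simp
    then show "norm (\<tau> (r n)) \<ge> real n" using \<tau>n[of "r n"] by linarith
  qed
  have Gcont: "continuous_on I G"
    unfolding continuous_on_iff
  proof (intro ballI allI impI)
    fix t and e :: real assume t: "t \<in> I" and e: "e > 0"
    then have "e / 2 > 0" by simp
    from uc_shift[OF F_uc this] obtain d where d: "d > 0" and
      dH: "\<And>t c c' x. t + c \<in> I \<Longrightarrow> t + c' \<in> I \<Longrightarrow> dist c c' < d \<Longrightarrow>
            dist (F (t + c) x) (F (t + c') x) < e / 2" by blast
    show "\<exists>d>0. \<forall>t'\<in>I. dist t' t < d \<longrightarrow> dist (G t') (G t) < e"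
    proof (intro exI[of _ d] conjI ballI impI d)
      fix t' assume t': "t' \<in> I" and dt: "dist t' t < d"
      have "\<forall>n. dist (F (t' + \<tau> (r n)) 0) (F (t + \<tau> (r n)) 0) \<le> e / 2"
      proof
        fix n
        have "dist (F (\<tau> (r n) + t') 0) (F (\<tau> (r n) + t) 0) < e / 2"
          using dH[OF I_add[OF \<tau>I t'] I_add[OF \<tau>I t] dt] .
        then show "dist (F (t' + \<tau> (r n)) 0) (F (t + \<tau> (r n)) 0) \<le> e / 2"
          by (simp add: add.commute)
      qed
      then have "dist (G t') (G t) \<le> e / 2"
        by (intro lim_dist_le[OF conv[OF t'] conv[OF t]]) simp
      then show "dist (G t') (G t) < e" using e by linarith
    qed
  qed
  have Fcont: "continuous_on I (\<lambda>t. F t 0)"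
  proof -
    have c1: "continuous_on (I \<times> UNIV) (\<lambda>(t, x). F t x)"
      by (rule uniformly_continuous_imp_continuous[OF F_uc])
    have c2: "continuous_on I (\<lambda>t. (t, 0::'x))" by (intro continuous_intros)
    have "continuous_on I (\<lambda>t. (\<lambda>(t, x). F t x) (t, 0::'x))"
      by (rule continuous_on_compose2[OF c1 c2]) auto
    then show ?thesis by simp
  qed
  have Gap: "bohr_ap I G"
    unfolding bohr_ap_def
  proof (intro conjI Gcont allI impI)
    fix e :: real assume e: "e > 0"
    from apU[OF e] obtain l M where l: "l > 0" and M: "M > 0" and
      ap: "\<forall>t0\<in>I. \<exists>\<tau>\<in>cball t0 l \<inter> I.
        \<forall>t x. t \<in> I_ge I M \<and> t + \<tau> \<in> I_ge I M \<and> x \<in> UNIV \<longrightarrow> norm (F (t + \<tau>) x - F t x) \<le> e"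
      by blast
    show "\<exists>l>0. \<forall>t0\<in>I. \<exists>\<tau>\<in>cball t0 l \<inter> I. \<forall>t\<in>I. norm (G (t + \<tau>) - G t) \<le> e"
    proof (intro exI[of _ l] conjI l ballI)
      fix t0 assume t0: "t0 \<in> I"
      from ap t0 obtain s where s: "s \<in> cball t0 l \<inter> I" and
        aps: "\<forall>t x. t \<in> I_ge I M \<and> t + s \<in> I_ge I M \<and> x \<in> UNIV \<longrightarrow> norm (F (t + s) x - F t x) \<le> e"
        by blast
      have sI: "s \<in> I" using s by blast
      have "\<forall>t\<in>I. norm (G (t + s) - G t) \<le> e"
      proof
        fix t assume t: "t \<in> I"
        have ev: "eventually (\<lambda>n. dist (F ((t + s) + \<tau> (r n)) 0) (F (t + \<tau> (r n)) 0) \<le> e) sequentially"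
          unfolding eventually_sequentially
        proof (intro exI[of _ "nat \<lceil>M\<rceil>"] allI impI)
          fix n assume n: "n \<ge> nat \<lceil>M\<rceil>"
          have "real n \<ge> M" using n by linarith
          then have "norm (\<tau> (r n)) \<ge> M" using rn[of n] by linarith
          then have bM: "\<tau> (r n) \<in> I_ge I M" using \<tau>I unfolding I_ge_def by blast
          have A1: "\<tau> (r n) + t \<in> I_ge I M" using cond_c M bM t by blast
          have A2: "\<tau> (r n) + (t + s) \<in> I_ge I M" using cond_c M bM I_add[OF t sI] by blast
          have "norm (F ((\<tau> (r n) + t) + s) 0 - F (\<tau> (r n) + t) 0) \<le> e"
          proof -
            have A2': "\<tau> (r n) + t + s \<in> I_ge I M" using A2 by (simp add: add.assoc add.commute add.left_commute)
            show ?thesis using aps[rule_format, OF conjI[OF A1 conjI[OF A2' UNIV_I]]] .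
          qed
          then show "dist (F ((t + s) + \<tau> (r n)) 0) (F (t + \<tau> (r n)) 0) \<le> e"
            by (simp add: dist_norm algebra_simps)
        qed
        have "dist (G (t + s)) (G t) \<le> e"
          by (rule lim_dist_le[OF conv[OF I_add[OF t sI]] conv[OF t] ev])
        then show "norm (G (t + s) - G t) \<le> e" by (simp add: dist_norm)
      qed
      then show "\<exists>\<tau>\<in>cball t0 l \<inter> I. \<forall>t\<in>I. norm (G (t + \<tau>) - G t) \<le> e" using s by blast
    qed
  qed
  have Qlim: "\<forall>e>0. \<exists>M. \<forall>t\<in>I. norm t \<ge> M \<longrightarrow> norm (F t 0 - G t) \<le> e"
  proof (intro allI impI)
    fix e :: real assume e: "e > 0"
    then have e2: "e / 2 > 0" by simp
    from unif[OF e2] obtain N where N: "\<And>n t. n \<ge> N \<Longrightarrow> t \<in> I \<Longrightarrow> dist (F (t + \<tau> (r n)) 0) (G t) < e / 2"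
      by blast
    from reals_Archimedean[OF e2] obtain j0 where j0: "inverse (real (Suc j0)) < e / 2" by blast
    define n where "n = max N j0"
    have nN: "n \<ge> N" unfolding n_def by simp
    have "r n \<ge> j0" using seq_suble[OF r, of n] unfolding n_def by simp
    then have "1 / real (Suc (r n)) \<le> 1 / real (Suc j0)" by (simp add: frac_le)
    then have q: "1 / real (Suc (r n)) < e / 2" using j0 by (simp add: inverse_eq_divide)
    show "\<exists>M. \<forall>t\<in>I. norm t \<ge> M \<longrightarrow> norm (F t 0 - G t) \<le> e"
    proof (intro exI[of _ "Mj (r n)"] ballI impI)
      fix t assume t: "t \<in> I" and nt: "norm t \<ge> Mj (r n)"
      then have tM: "t \<in> I_ge I (Mj (r n))" unfolding I_ge_def by blast
      have a: "norm (F (t + \<tau> (r n)) 0 - F t 0) \<le> 1 / real (Suc (r n))" by (rule \<tau>ap[OF tM])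
      have b: "norm (F (t + \<tau> (r n)) 0 - G t) < e / 2" using N[OF nN t] by (simp add: dist_norm)
      have "norm (F t 0 - G t) \<le> norm (F (t + \<tau> (r n)) 0 - F t 0) + norm (F (t + \<tau> (r n)) 0 - G t)"
      proof -
        have "F t 0 - G t = (F (t + \<tau> (r n)) 0 - G t) - (F (t + \<tau> (r n)) 0 - F t 0)" by simp
        then show ?thesis using norm_triangle_ineq4[of "F (t + \<tau> (r n)) 0 - G t" "F (t + \<tau> (r n)) 0 - F t 0"]
          by simp
      qed
      then show "norm (F t 0 - G t) \<le> e" using a b q by linarith
    qed
  qed
  show "asymp_bohr_ap I (\<lambda>t. F t 0)"
    unfolding asymp_bohr_ap_def
    by (intro exI[of _ G] exI[of _ "\<lambda>t. F t 0 - G t"] conjI Gap Qlim continuous_on_diff Fcont Gcont) simp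
qed

end
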